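(* Let $f,g:[0,\infty)\to[0,\infty)$, let $0<a<b<\infty$, and suppose $fg$ is Lebesgue integrable on $[a,b]$. Let $q\ge1$ and $(\alpha_1,m_1),(\alpha_2,m_2)\in(0,1]^2$. Suppose $f^q$ is $(\alpha_1,m_1)$-GA-convex on $[0,\max\{a^{1/m_1},b\}]$ and $g^q$ is $(\alpha_2,m_2)$-GA-convex on $[0,\max\{a^{1/m_2},b\}]$. Then \begin{multline*} \int_a^b f(x)g(x)\,dx\le(\ln b-\ln a)[L(a,b)]^{1-1/q}\Bigl\{m_1m_2\bigl[L(a,b)-G(\alpha_1,1)-G(\alpha_2,1)+G(\alpha_1+\alpha_2,1)\bigr]f^q(a^{1/m_1})g^q(a^{1/m_2})\\ +m_1\bigl[G(\alpha_2,1)-G(\alpha_1+\alpha_2,1)\bigr]f^q(a^{1/m_1})g^q(b)+m_2\bigl[G(\alpha_1,1)-G(\alpha_1+\alpha_2,1)\bigr]f^q(b)g^q(a^{1/m_2})\\ +G(\alpha_1+\alpha_2,1)f^q(b)g^q(b)\Bigr\}^{1/q}. \end{multline*}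
   Context: For $c>0$, $h:[0,c]\to\mathbb{R}$ and $(\alpha,m)\in(0,1]^2$, $h$ is called $(\alpha,m)$-GA-convex on $[0,c]$ if $h\bigl(x^\lambda y^{m(1-\lambda)}\bigr)\le\lambda^\alpha h(x)+m(1-\lambda^\alpha)h(y)$ for all $x,y\in[0,c]$ and all $\lambda\in[0,1]$ (with the convention $0^0=1$). For fixed $0<a<b$ and $\ell\ge0$, $\alpha>0$, set $G(\alpha,\ell)=\int_0^1 t^\alpha a^{\ell(1-t)}b^{\ell t}\,dt$. For $x,y>0$, $x\neq y$, the logarithmic mean is $L(x,y)=\frac{y-x}{\ln y-\ln x}$. *)

theory Defs
  imports "HOL-Analysis.Analysis"
begin

text \<open>Real power with the convention 0^0 = 1 (for nonnegative bases).\<close>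
definition pw :: "real \<Rightarrow> real \<Rightarrow> real" where
  "pw x t = (if t = 0 then 1 else x powr t)"

definition GA_convex :: "real \<Rightarrow> real \<Rightarrow> real \<Rightarrow> (real \<Rightarrow> real) \<Rightarrow> bool" where
  "GA_convex \<alpha> m c h \<longleftrightarrow>
     (\<forall>x\<in>{0..c}. \<forall>y\<in>{0..c}. \<forall>t\<in>{0..1}.
        h (pw x t * pw y (m * (1 - t))) \<le> pw t \<alpha> * h x + m * (1 - pw t \<alpha>) * h y)"

definition G :: "real \<Rightarrow> real \<Rightarrow> real \<Rightarrow> real \<Rightarrow> real" where
  "G a b \<alpha> l = integral {0..1} (\<lambda>t. pw t \<alpha> * a powr (l * (1 - t)) * b powr (l * t))"

definition logmean :: "real \<Rightarrow> real \<Rightarrow> real" where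
  "logmean x y = (y - x) / (ln y - ln x)"

end

theory Submission
  imports Defs
begin

lemma young1:
  fixes u K q P :: real
  assumes "u \<ge> 0" "K > 0" "q \<ge> 1" "u powr q \<le> P"
  shows "u \<le> K * ((1/q) * (P / K powr q) + (1 - 1/q))"
proof (cases "q = 1")
  case True
  then show ?thesis using assms by simp
next
  case False
  hence q1: "q > 1" using assms by simp
  define s where "s = u / K"
  have s0: "s \<ge> 0" using assms by (simp add: s_def)
  have "s * 1 \<le> s powr q / q + 1 powr (q/(q-1)) / (q/(q-1))"
    by (rule Youngs_inequality) (use q1 s0 in \<open>auto simp: field_simps\<close>)
  hence y: "s \<le> s powr q / q + (1 - 1/q)" using q1 by (simp add: field_simps)
  have "s powr q = u powr q / K powr q" using assms by (simp add: s_def powr_divide)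
  also have "\<dots> \<le> P / K powr q" using assms by (simp add: divide_right_mono)
  finally have "s powr q / q \<le> (P / K powr q) / q"
    by (rule divide_right_mono) (use q1 in auto)
  hence "s \<le> (1/q) * (P / K powr q) + (1 - 1/q)" using y by (simp add: mult.commute)
  hence "K * s \<le> K * ((1/q) * (P / K powr q) + (1 - 1/q))" using assms by simp
  thus ?thesis using assms by (simp add: s_def)
qed

lemma subst_aux:
  fixes a b :: real and h :: "real \<Rightarrow> real"
  assumes ab: "0<a" "a<b" and hc: "continuous_on {0..1} h"
  shows "((\<lambda>x. h ((ln x - ln a)/(ln b - ln a))) has_integral
           (ln b - ln a) * integral {0..1} (\<lambda>t. a powr (1-t) * b powr t * h t)) {a..b}"
proof -
  define A where "A = ln b - ln a"
  have A: "A > 0" using ab by (simp add: A_def)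
  define g where "g t = exp (ln a + t * A)" for t
  define \<tau> where "\<tau> x = (ln x - ln a) / A" for x
  have g0: "g 0 = a" and g1: "g 1 = b" using ab by (auto simp: g_def A_def)
  have gmono: "g s \<le> g t" if "s \<le> t" for s t using that A by (simp add: g_def mult_right_mono)
  have gimg: "g ` {0..1} \<subseteq> {a..b}" using gmono g0 g1 by fastforce
  have \<tau>g: "\<tau> (g t) = t" for t using A by (simp add: \<tau>_def g_def)
  have \<tau>img: "\<tau> ` {a..b} \<subseteq> {0..1}"
  proof
    fix y assume "y \<in> \<tau> ` {a..b}"
    then obtain x where x: "x \<in> {a..b}" "y = \<tau> x" by auto
    have "ln a \<le> ln x" "ln x \<le> ln b" using x ab by auto
    hence "0 \<le> ln x - ln a" "ln x - ln a \<le> A" by (auto simp: A_def)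
    thus "y \<in> {0..1}" using x A by (auto simp: \<tau>_def divide_le_eq)
  qed
  have \<tau>c: "continuous_on {a..b} \<tau>" unfolding \<tau>_def
    using ab A by (auto intro!: continuous_intros)
  have hc2: "continuous_on {a..b} (\<lambda>x. h (\<tau> x))"
    by (rule continuous_on_compose2[OF hc \<tau>c \<tau>img])
  have der: "(g has_field_derivative A * g t) (at t within {0..1})" for t
    unfolding g_def by (auto intro!: derivative_eq_intros)
  have "((\<lambda>t. (A * g t) *\<^sub>R (\<lambda>x. h (\<tau> x)) (g t)) has_integral integral {g 0..g 1} (\<lambda>x. h (\<tau> x))) {0..1}"
    by (rule has_integral_substitution[OF _ _ gimg hc2 der]) (simp_all add: g0 g1 ab less_imp_le)
  hence "((\<lambda>t. A * (g t * h t)) has_integral integral {a..b} (\<lambda>x. h (\<tau> x))) {0..1}"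
    by (simp only: \<tau>g g0 g1 real_scaleR_def mult.assoc)
  hence "((\<lambda>t. g t * h t) has_integral integral {a..b} (\<lambda>x. h (\<tau> x)) / A) {0..1}"
  proof -
    assume h: "((\<lambda>t. A * (g t * h t)) has_integral integral {a..b} (\<lambda>x. h (\<tau> x))) {0..1}"
    have "((\<lambda>t. (1/A) *\<^sub>R (A * (g t * h t))) has_integral (1/A) *\<^sub>R integral {a..b} (\<lambda>x. h (\<tau> x))) {0..1}"
      by (rule has_integral_cmul[OF h])
    thus ?thesis using A by simp
  qed
  moreover have gf: "g = (\<lambda>t. a powr (1-t) * b powr t)"
  proof
    fix t
    have "a powr (1-t) * b powr t = exp((1-t)*ln a + t*ln b)" using ab by (simp add: powr_def exp_add)
    thus "g t = a powr (1-t) * b powr t" by (simp add: g_def A_def algebra_simps)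
  qed
  ultimately have e1: "integral {0..1} (\<lambda>t. a powr (1-t) * b powr t * h t) = integral {a..b} (\<lambda>x. h (\<tau> x)) / A"
    by (intro integral_unique) simp
  have e2: "((\<lambda>x. h (\<tau> x)) has_integral integral {a..b} (\<lambda>x. h (\<tau> x))) {a..b}"
    using integrable_continuous_real[OF hc2] by (rule has_integral_integral[THEN iffD1])
  have e3: "A * integral {0..1} (\<lambda>t. a powr (1-t) * b powr t * h t) = integral {a..b} (\<lambda>x. h (\<tau> x))"
    using A e1 by simp
  have e4: "integral {a..b} (\<lambda>x. h (\<tau> x)) = (ln b - ln a) * integral {0..1} (\<lambda>t. a powr (1-t) * b powr t * h t)"
    using e3 by (simp add: A_def)
  show ?thesis using e2 unfolding e4 unfolding \<tau>_def A_def .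
qed

lemma keyx:
  fixes a b m x :: real
  assumes ab: "0 < a" "a < b" and m: "0 < m" and x: "x \<in> {a..b}"
  shows "pw b ((ln x - ln a)/(ln b - ln a)) * pw (a powr (1/m)) (m * (1 - (ln x - ln a)/(ln b - ln a))) = x"
proof -
  define t where "t = (ln x - ln a)/(ln b - ln a)"
  have A: "ln b - ln a > 0" using ab by simp
  have x0: "x > 0" using x ab by auto
  have e1: "pw b t = b powr t" using ab by (simp add: pw_def)
  have e2: "pw (a powr (1/m)) (m * (1 - t)) = a powr (1 - t)"
    using ab m by (simp add: pw_def powr_powr)
  have "a powr (1 - t) * b powr t = exp ((1-t) * ln a + t * ln b)"
    using ab by (simp add: powr_def exp_add)
  also have "(1-t) * ln a + t * ln b = ln a + t * (ln b - ln a)" by (simp add: algebra_simps)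
  also have "t * (ln b - ln a) = ln x - ln a" using A by (simp add: t_def)
  finally have "a powr (1 - t) * b powr t = x" using x0 by simp
  thus ?thesis using e1 e2 by (simp add: t_def mult.commute)
qed

lemma pw_cont: assumes "0 < \<alpha>" shows "continuous_on {0..1} (\<lambda>t. pw t \<alpha>)"
proof -
  have e: "(\<lambda>t. pw t \<alpha>) = (\<lambda>t. t powr \<alpha>)" using assms by (simp add: pw_def fun_eq_iff)
  have c: "continuous_on {0..1} (\<lambda>t::real. t powr \<alpha>)"
    by (intro continuous_on_powr' continuous_on_id continuous_on_const) (use assms in auto)
  show ?thesis unfolding e by (rule c)
qed

lemma pw_01: "0 < \<alpha> \<Longrightarrow> t \<in> {0..1} \<Longrightarrow> 0 \<le> pw t \<alpha> \<and> pw t \<alpha> \<le> 1"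
  unfolding pw_def by (auto intro!: powr_le1)

lemma pw_add: "0 < \<alpha> \<Longrightarrow> 0 < \<beta> \<Longrightarrow> pw t \<alpha> * pw t \<beta> = pw t (\<alpha> + \<beta>)"
  unfolding pw_def by (simp add: powr_add)

theorem theorem3p5:
  fixes f g :: "real \<Rightarrow> real" and a b q \<alpha>\<^sub>1 m\<^sub>1 \<alpha>\<^sub>2 m\<^sub>2 :: real
  assumes f_nn: "\<forall>x\<ge>0. f x \<ge> 0" and g_nn: "\<forall>x\<ge>0. g x \<ge> 0"
    and ab: "0 < a" "a < b"
    and int: "set_integrable lborel {a..b} (\<lambda>x. f x * g x)"
    and q: "q \<ge> 1"
    and p1: "0 < \<alpha>\<^sub>1" "\<alpha>\<^sub>1 \<le> 1" "0 < m\<^sub>1" "m\<^sub>1 \<le> 1"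
    and p2: "0 < \<alpha>\<^sub>2" "\<alpha>\<^sub>2 \<le> 1" "0 < m\<^sub>2" "m\<^sub>2 \<le> 1"
    and cf: "GA_convex \<alpha>\<^sub>1 m\<^sub>1 (max (a powr (1 / m\<^sub>1)) b) (\<lambda>x. f x powr q)"
    and cg: "GA_convex \<alpha>\<^sub>2 m\<^sub>2 (max (a powr (1 / m\<^sub>2)) b) (\<lambda>x. g x powr q)"
  shows "(LINT x:{a..b}|lborel. f x * g x) \<le>
     (ln b - ln a) * logmean a b powr (1 - 1 / q) *
     (m\<^sub>1 * m\<^sub>2 * (logmean a b - G a b \<alpha>\<^sub>1 1 - G a b \<alpha>\<^sub>2 1 + G a b (\<alpha>\<^sub>1 + \<alpha>\<^sub>2) 1)
          * f (a powr (1 / m\<^sub>1)) powr q * g (a powr (1 / m\<^sub>2)) powr q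
      + m\<^sub>1 * (G a b \<alpha>\<^sub>2 1 - G a b (\<alpha>\<^sub>1 + \<alpha>\<^sub>2) 1) * f (a powr (1 / m\<^sub>1)) powr q * g b powr q
      + m\<^sub>2 * (G a b \<alpha>\<^sub>1 1 - G a b (\<alpha>\<^sub>1 + \<alpha>\<^sub>2) 1) * f b powr q * g (a powr (1 / m\<^sub>2)) powr q
      + G a b (\<alpha>\<^sub>1 + \<alpha>\<^sub>2) 1 * f b powr q * g b powr q) powr (1 / q)"
proof -
  define A where "A = ln b - ln a"
  have A: "A > 0" using ab by (simp add: A_def)
  define \<tau> where "\<tau> x = (ln x - ln a) / A" for x
  define L where "L = logmean a b"
  define G1 where "G1 = G a b \<alpha>\<^sub>1 1"
  define G2 where "G2 = G a b \<alpha>\<^sub>2 1"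
  define G12 where "G12 = G a b (\<alpha>\<^sub>1 + \<alpha>\<^sub>2) 1"
  define Fa where "Fa = f (a powr (1 / m\<^sub>1)) powr q"
  define Fb where "Fb = f b powr q"
  define Ga where "Ga = g (a powr (1 / m\<^sub>2)) powr q"
  define Gb where "Gb = g b powr q"
  define S where "S = m\<^sub>1 * m\<^sub>2 * (L - G1 - G2 + G12) * Fa * Ga + m\<^sub>1 * (G2 - G12) * Fa * Gb
      + m\<^sub>2 * (G1 - G12) * Fb * Ga + G12 * Fb * Gb"
  define B1 where "B1 t = pw t \<alpha>\<^sub>1 * Fb + m\<^sub>1 * (1 - pw t \<alpha>\<^sub>1) * Fa" for t
  define B2 where "B2 t = pw t \<alpha>\<^sub>2 * Gb + m\<^sub>2 * (1 - pw t \<alpha>\<^sub>2) * Ga" for t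
  define P where "P t = B1 t * B2 t" for t
  define \<phi> where "\<phi> t = a powr (1-t) * b powr t" for t
  have nnF: "Fa \<ge> 0" "Fb \<ge> 0" "Ga \<ge> 0" "Gb \<ge> 0" by (simp_all add: Fa_def Fb_def Ga_def Gb_def)
  have B1nn: "B1 t \<ge> 0" if "t \<in> {0..1}" for t
    using pw_01[OF p1(1) that] nnF p1 by (simp add: B1_def)
  have B2nn: "B2 t \<ge> 0" if "t \<in> {0..1}" for t
    using pw_01[OF p2(1) that] nnF p2 by (simp add: B2_def)
  have contP: "continuous_on {0..1} P"
    unfolding P_def B1_def B2_def
    by (intro continuous_intros pw_cont p1(1) p2(1))
  have \<tau>01: "\<tau> x \<in> {0..1}" if "x \<in> {a..b}" for x
  proof -
    have "ln a \<le> ln x" "ln x \<le> ln b" using that ab by auto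
    hence "0 \<le> ln x - ln a" "ln x - ln a \<le> A" by (auto simp: A_def)
    thus ?thesis using A by (auto simp: \<tau>_def divide_le_eq)
  qed
  have pt: "(f x * g x) powr q \<le> P (\<tau> x)" if x: "x \<in> {a..b}" for x
  proof -
    have x0: "x \<ge> 0" using x ab by auto
    have t: "\<tau> x \<in> {0..1}" using \<tau>01[OF x] .
    have k1: "pw b (\<tau> x) * pw (a powr (1/m\<^sub>1)) (m\<^sub>1 * (1 - \<tau> x)) = x"
      using keyx[OF ab p1(3) x] by (simp add: \<tau>_def A_def)
    have k2: "pw b (\<tau> x) * pw (a powr (1/m\<^sub>2)) (m\<^sub>2 * (1 - \<tau> x)) = x"
      using keyx[OF ab p2(3) x] by (simp add: \<tau>_def A_def)
    have "a powr (1/m\<^sub>1) \<ge> 0" "a powr (1/m\<^sub>2) \<ge> 0" by auto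
    have bf: "f x powr q \<le> B1 (\<tau> x)"
    proof -
      have bc: "b \<in> {0..max (a powr (1/m\<^sub>1)) b}" using ab by auto
      have ac: "a powr (1/m\<^sub>1) \<in> {0..max (a powr (1/m\<^sub>1)) b}" by auto
      show ?thesis using cf[unfolded GA_convex_def, rule_format, OF bc ac t]
        by (simp add: k1 B1_def Fa_def Fb_def)
    qed
    have bg: "g x powr q \<le> B2 (\<tau> x)"
    proof -
      have bc: "b \<in> {0..max (a powr (1/m\<^sub>2)) b}" using ab by auto
      have ac: "a powr (1/m\<^sub>2) \<in> {0..max (a powr (1/m\<^sub>2)) b}" by auto
      show ?thesis using cg[unfolded GA_convex_def, rule_format, OF bc ac t]
        by (simp add: k2 B2_def Ga_def Gb_def)
    qed
    have "(f x * g x) powr q = f x powr q * g x powr q" by (rule powr_mult)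
    also have "\<dots> \<le> B1 (\<tau> x) * B2 (\<tau> x)"
      by (rule mult_mono[OF bf bg]) (use B1nn[OF t] in auto)
    finally show ?thesis by (simp add: P_def)
  qed
  have sub: "((\<lambda>x. h (\<tau> x)) has_integral A * integral {0..1} (\<lambda>t. \<phi> t * h t)) {a..b}"
    if "continuous_on {0..1} h" for h
    using subst_aux[OF ab that] unfolding \<tau>_def A_def \<phi>_def .
  have o1: "((\<lambda>x. 1) has_integral A * integral {0..1} (\<lambda>t. \<phi> t * 1)) {a..b}"
    using sub[OF continuous_on_const[of _ "1::real"]] by simp
  have o2: "((\<lambda>x. 1::real) has_integral (b - a)) {a..b}"
    using has_integral_const_real[of "1::real" a b] ab by (simp add: less_imp_le)
  have "A * integral {0..1} \<phi> = b - a"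
    using has_integral_unique[OF o1 o2] by simp
  hence Iphi: "integral {0..1} \<phi> = L" using A by (simp add: L_def logmean_def A_def field_simps)
  have contphi: "continuous_on {0..1} \<phi>" unfolding \<phi>_def using ab
    by (intro continuous_intros) auto
  have hphi: "(\<phi> has_integral L) {0..1}"
    using integrable_continuous_real[OF contphi] Iphi by (metis has_integral_integral)
  have hG: "((\<lambda>t. pw t \<alpha> * \<phi> t) has_integral G a b \<alpha> 1) {0..1}" if "0 < \<alpha>" for \<alpha>
  proof -
    have c: "continuous_on {0..1} (\<lambda>t. pw t \<alpha> * \<phi> t)"
      by (intro continuous_intros pw_cont that contphi)
    have "G a b \<alpha> 1 = integral {0..1} (\<lambda>t. pw t \<alpha> * \<phi> t)"
      by (simp add: G_def \<phi>_def mult.assoc)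
    thus ?thesis using integrable_continuous_real[OF c] by (metis has_integral_integral)
  qed
  have p12: "0 < \<alpha>\<^sub>1 + \<alpha>\<^sub>2" using p1 p2 by simp
  have comb: "((\<lambda>t. m\<^sub>1 * m\<^sub>2 * Fa * Ga * (\<phi> t - pw t \<alpha>\<^sub>1 * \<phi> t - pw t \<alpha>\<^sub>2 * \<phi> t + pw t (\<alpha>\<^sub>1 + \<alpha>\<^sub>2) * \<phi> t)
       + m\<^sub>1 * Fa * Gb * (pw t \<alpha>\<^sub>2 * \<phi> t - pw t (\<alpha>\<^sub>1 + \<alpha>\<^sub>2) * \<phi> t)
       + m\<^sub>2 * Fb * Ga * (pw t \<alpha>\<^sub>1 * \<phi> t - pw t (\<alpha>\<^sub>1 + \<alpha>\<^sub>2) * \<phi> t)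
       + Fb * Gb * (pw t (\<alpha>\<^sub>1 + \<alpha>\<^sub>2) * \<phi> t)) has_integral
       (m\<^sub>1 * m\<^sub>2 * Fa * Ga * (L - G1 - G2 + G12) + m\<^sub>1 * Fa * Gb * (G2 - G12)
        + m\<^sub>2 * Fb * Ga * (G1 - G12) + Fb * Gb * G12)) {0..1}"
    unfolding G1_def G2_def G12_def
    by (intro has_integral_add has_integral_diff has_integral_mult_right hphi hG p1(1) p2(1) p12)
  have feq: "\<phi> t * P t = m\<^sub>1 * m\<^sub>2 * Fa * Ga * (\<phi> t - pw t \<alpha>\<^sub>1 * \<phi> t - pw t \<alpha>\<^sub>2 * \<phi> t + pw t (\<alpha>\<^sub>1 + \<alpha>\<^sub>2) * \<phi> t)
       + m\<^sub>1 * Fa * Gb * (pw t \<alpha>\<^sub>2 * \<phi> t - pw t (\<alpha>\<^sub>1 + \<alpha>\<^sub>2) * \<phi> t)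
       + m\<^sub>2 * Fb * Ga * (pw t \<alpha>\<^sub>1 * \<phi> t - pw t (\<alpha>\<^sub>1 + \<alpha>\<^sub>2) * \<phi> t)
       + Fb * Gb * (pw t (\<alpha>\<^sub>1 + \<alpha>\<^sub>2) * \<phi> t)" for t
    unfolding P_def B1_def B2_def pw_add[OF p1(1) p2(1), symmetric] by (simp add: algebra_simps)
  have "((\<lambda>t. \<phi> t * P t) has_integral S) {0..1}"
    using comb unfolding feq[symmetric] S_def by (simp add: algebra_simps)
  hence IS: "integral {0..1} (\<lambda>t. \<phi> t * P t) = S" by (rule integral_unique)
  have hPt: "((\<lambda>x. P (\<tau> x)) has_integral A * S) {a..b}"
    using sub[OF contP] IS by simp
  have Snn: "S \<ge> 0"
  proof -
    have "integral {0..1} (\<lambda>t. \<phi> t * P t) \<ge> 0"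
      by (rule integral_nonneg)
        (use integrable_continuous_real[OF continuous_on_mult[OF contphi contP]] in
         \<open>auto simp: \<phi>_def intro!: mult_nonneg_nonneg B1nn B2nn simp: P_def\<close>)
    thus ?thesis using IS by simp
  qed
  have Ieq: "(LINT x:{a..b}|lborel. f x * g x) = integral {a..b} (\<lambda>x. f x * g x)"
    using set_borel_integral_eq_integral(2)[OF int] .
  have hfg: "((\<lambda>x. f x * g x) has_integral integral {a..b} (\<lambda>x. f x * g x)) {a..b}"
    using set_borel_integral_eq_integral(1)[OF int] by (metis has_integral_integral)
  define I where "I = integral {a..b} (\<lambda>x. f x * g x)"
  have bnd: "I \<le> K / (q * K powr q) * (A * S) + K * (1 - 1/q) * (b - a)" if K: "K > 0" for K
  proof -
    have h2: "((\<lambda>x. K / (q * K powr q) * P (\<tau> x) + K * (1 - 1/q)) has_integral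
       (K / (q * K powr q) * (A * S) + K * (1 - 1/q) * (b - a))) {a..b}"
      using has_integral_add[OF has_integral_mult_right[where c="K / (q * K powr q)", OF hPt] has_integral_const_real[of "K * (1 - 1/q)" a b]] ab
      by (simp add: mult.commute less_imp_le)
    show ?thesis unfolding I_def
    proof (rule has_integral_le[OF hfg h2])
      fix x assume x: "x \<in> {a..b}"
      have "f x * g x \<le> K * ((1/q) * (P (\<tau> x) / K powr q) + (1 - 1/q))"
        by (rule young1) (use x ab f_nn g_nn K q pt[OF x] in auto)
      thus "f x * g x \<le> K / (q * K powr q) * P (\<tau> x) + K * (1 - 1/q)"
        by (simp add: algebra_simps)
    qed
  qed
  have Lpos: "L > 0" using ab A by (simp add: L_def logmean_def A_def)
  have baL: "b - a = A * L" using A by (simp add: L_def logmean_def A_def)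
  have q0: "q > 0" using q by simp
  have goal: "I \<le> A * L powr (1 - 1/q) * S powr (1/q)"
  proof (cases "S = 0")
    case True
    show ?thesis
    proof (rule ccontr)
      assume "\<not> ?thesis"
      hence Ip: "I > 0" using True q0 by simp
      define K where "K = I / (2 * (A * L))"
      have Kp: "K > 0" using Ip A Lpos by (simp add: K_def)
      have "I \<le> K * (1 - 1/q) * (A * L)" using bnd[OF Kp] True baL by simp
      also have "\<dots> \<le> K * (A * L)"
        using Kp A Lpos q0 by (intro mult_right_mono mult_left_mono) auto
      also have "\<dots> = I / 2" using A Lpos by (simp add: K_def)
      finally show False using Ip by simp
    qed
  next
    case False
    hence Sp: "S > 0" using Snn by simp
    define K where "K = (S / L) powr (1/q)"
    have Kp: "K > 0" using Sp Lpos by (simp add: K_def)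
    have Kq: "K powr q = S / L" using Sp Lpos q0 by (simp add: K_def powr_powr)
    have "I \<le> K / (q * (S / L)) * (A * S) + K * (1 - 1/q) * (A * L)"
      using bnd[OF Kp] Kq baL by simp
    also have "\<dots> = K * A * L" using Sp Lpos q0 by (simp add: field_simps)
    also have "\<dots> = A * L powr (1 - 1/q) * S powr (1/q)"
      using Sp Lpos by (simp add: K_def powr_divide powr_diff)
    finally show ?thesis .
  qed
  show ?thesis using goal unfolding Ieq I_def[symmetric] S_def L_def G1_def G2_def G12_def Fa_def Fb_def Ga_def Gb_def A_def
    by (simp add: algebra_simps)
qed

end
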